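(* Let $W$ be a $p$-locally dense, $p$-regular graphon. Then the kernel $W-p$ is positive semidefinite.
   Context: Let $(\Omega,\mu)$ be an atomless standard probability space. A graphon is a symmetric measurable $W:\Omega\times\Omega\to[0,1]$; it is $p$-regular if $\int_\Omega W(x,y)\,dy=p$ for a.e. $x$, and $p$-locally dense if $\iint_{U\times U}W\ge p\,\mu(U)^2$ for every measurable $U\subseteq\Omega$. A kernel (bounded symmetric measurable $K:\Omega\times\Omega\to\mathbb R$) is positive semidefinite if $\iint f(x)K(x,y)f(y)\,dx\,dy\ge0$ for every bounded measurable $f:\Omega\to\mathbb R$. *)

theory Defs
  imports "HOL-Probability.Probability"
begin

text \<open>Standard probability space: a probability measure on a standard Borel space,
  i.e. a Polish space with its Borel sigma-algebra.\<close>
definition standard_prob_space :: "'a::polish_space measure \<Rightarrow> bool" where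
  "standard_prob_space M \<longleftrightarrow> prob_space M \<and> sets M = sets borel"

definition atomless :: "'a measure \<Rightarrow> bool" where
  "atomless M \<longleftrightarrow> (\<forall>A\<in>sets M. measure M A > 0 \<longrightarrow>
      (\<exists>B\<in>sets M. B \<subseteq> A \<and> 0 < measure M B \<and> measure M B < measure M A))"

definition graphon :: "'a measure \<Rightarrow> ('a \<Rightarrow> 'a \<Rightarrow> real) \<Rightarrow> bool" where
  "graphon M W \<longleftrightarrow> (\<lambda>z. W (fst z) (snd z)) \<in> borel_measurable (M \<Otimes>\<^sub>M M)
      \<and> (\<forall>x\<in>space M. \<forall>y\<in>space M. W x y = W y x \<and> 0 \<le> W x y \<and> W x y \<le> 1)"

definition regular_graphon :: "'a measure \<Rightarrow> real \<Rightarrow> ('a \<Rightarrow> 'a \<Rightarrow> real) \<Rightarrow> bool" where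
  "regular_graphon M p W \<longleftrightarrow> (AE x in M. (\<integral>y. W x y \<partial>M) = p)"

definition locally_dense :: "'a measure \<Rightarrow> real \<Rightarrow> ('a \<Rightarrow> 'a \<Rightarrow> real) \<Rightarrow> bool" where
  "locally_dense M p W \<longleftrightarrow> (\<forall>U\<in>sets M.
      (\<integral>z. indicator (U \<times> U) z * W (fst z) (snd z) \<partial>(M \<Otimes>\<^sub>M M)) \<ge> p * (measure M U)\<^sup>2)"

definition kernel :: "'a measure \<Rightarrow> ('a \<Rightarrow> 'a \<Rightarrow> real) \<Rightarrow> bool" where
  "kernel M K \<longleftrightarrow> (\<lambda>z. K (fst z) (snd z)) \<in> borel_measurable (M \<Otimes>\<^sub>M M)
      \<and> (\<exists>B. \<forall>x\<in>space M. \<forall>y\<in>space M. \<bar>K x y\<bar> \<le> B)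
      \<and> (\<forall>x\<in>space M. \<forall>y\<in>space M. K x y = K y x)"

definition psd_kernel :: "'a measure \<Rightarrow> ('a \<Rightarrow> 'a \<Rightarrow> real) \<Rightarrow> bool" where
  "psd_kernel M K \<longleftrightarrow> kernel M K \<and>
     (\<forall>f \<in> borel_measurable M. (\<exists>B. \<forall>x\<in>space M. \<bar>f x\<bar> \<le> B) \<longrightarrow>
        (\<integral>z. f (fst z) * K (fst z) (snd z) * f (snd z) \<partial>(M \<Otimes>\<^sub>M M)) \<ge> 0)"

end

theory Submission
  imports Defs
begin

lemma multiaffine_nonneg:
  fixes K :: "'i \<Rightarrow> 'i \<Rightarrow> real" and c :: "'i \<Rightarrow> real"
  assumes fin: "finite I" and KS: "\<And>S. S \<subseteq> I \<Longrightarrow> (\<Sum>a\<in>S. \<Sum>b\<in>S. K a b) \<ge> 0"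
    and c01: "\<And>a. a \<in> I \<Longrightarrow> 0 \<le> c a \<and> c a \<le> 1"
  shows "(\<Sum>a\<in>I. \<Sum>b\<in>I. (if a = b then c a else c a * c b) * K a b) \<ge> 0"
proof -
  define F where "F c = (\<Sum>a\<in>I. \<Sum>b\<in>I. (if a = b then c a else c a * c b) * K a b)" for c :: "'i \<Rightarrow> real"
  have main: "\<forall>c. card {a\<in>I. 0 < c a \<and> c a < 1} = n \<longrightarrow> (\<forall>a\<in>I. 0 \<le> c a \<and> c a \<le> 1) \<longrightarrow> F c \<ge> 0" for n
  proof (induction n rule: less_induct)
    case (less n)
    show ?case
    proof (intro allI impI)
      fix c :: "'i \<Rightarrow> real"
      assume hn: "card {a\<in>I. 0 < c a \<and> c a < 1} = n" and hc: "\<forall>a\<in>I. 0 \<le> c a \<and> c a \<le> 1"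
      show "F c \<ge> 0"
      proof (cases "\<exists>k\<in>I. 0 < c k \<and> c k < 1")
        case False
        define S where "S = {a\<in>I. c a = 1}"
        have c01': "a \<in> I \<Longrightarrow> c a = 0 \<or> c a = 1" for a
          using False hc by force
        have "F c = (\<Sum>a\<in>I. \<Sum>b\<in>I. (if a \<in> S \<and> b \<in> S then K a b else 0))"
          unfolding F_def S_def
          by (intro sum.cong refl) (use c01' in fastforce)
        also have "\<dots> = (\<Sum>a\<in>I. if a \<in> S then (\<Sum>b\<in>S. K a b) else 0)"
          by (intro sum.cong refl) (auto simp: S_def sum.inter_filter[OF fin])
        also have "\<dots> = (\<Sum>a\<in>S. \<Sum>b\<in>S. K a b)"
          unfolding S_def sum.inter_filter[OF fin] by (intro sum.cong refl) (simp add: sum.inter_filter[OF fin])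
        also have "\<dots> \<ge> 0" by (rule KS) (auto simp: S_def)
        finally show ?thesis .
      next
        case True
        then obtain k where k: "k \<in> I" "0 < c k" "c k < 1" by blast
        define c0 where "c0 = c(k := 0)"
        define c1 where "c1 = c(k := 1)"
        have termeq: "(if a = b then c a else c a * c b) * K a b =
           (1 - c k) * ((if a = b then c0 a else c0 a * c0 b) * K a b) +
           c k * ((if a = b then c1 a else c1 a * c1 b) * K a b)" for a b
          by (cases "a = k"; cases "b = k"; cases "a = b") (auto simp: c0_def c1_def algebra_simps)
        have "F c = (1 - c k) * F c0 + c k * F c1"
          unfolding F_def by (simp add: termeq sum.distrib sum_distrib_left)
        moreover have "F c0 \<ge> 0" "F c1 \<ge> 0"
        proof -
          have sub0: "{a\<in>I. 0 < c0 a \<and> c0 a < 1} \<subset> {a\<in>I. 0 < c a \<and> c a < 1}"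
            using k by (auto simp: c0_def)
          have sub1: "{a\<in>I. 0 < c1 a \<and> c1 a < 1} \<subset> {a\<in>I. 0 < c a \<and> c a < 1}"
            using k by (auto simp: c1_def)
          have l0: "card {a\<in>I. 0 < c0 a \<and> c0 a < 1} < n"
            using psubset_card_mono[OF _ sub0] fin hn by auto
          have l1: "card {a\<in>I. 0 < c1 a \<and> c1 a < 1} < n"
            using psubset_card_mono[OF _ sub1] fin hn by auto
          show "F c0 \<ge> 0" using less[OF l0] hc by (auto simp: c0_def)
          show "F c1 \<ge> 0" using less[OF l1] hc by (auto simp: c1_def)
        qed
        ultimately show ?thesis using k by simp
      qed
    qed
  qed
  show ?thesis using main c01 unfolding F_def by blast
qed


locale gsetup = prob_space M for M :: "'a measure" +
  fixes W :: "'a \<Rightarrow> 'a \<Rightarrow> real" and p :: real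
  assumes gr: "graphon M W" and reg: "regular_graphon M p W" and ld: "locally_dense M p W"
begin

sublocale PP: pair_prob_space M M by unfold_locales

lemma Wm[measurable]: "(\<lambda>z. W (fst z) (snd z)) \<in> borel_measurable (M \<Otimes>\<^sub>M M)"
  using gr by (simp add: graphon_def)

lemma Wb: "x \<in> space M \<Longrightarrow> y \<in> space M \<Longrightarrow> 0 \<le> W x y \<and> W x y \<le> 1 \<and> W x y = W y x"
  using gr by (simp add: graphon_def)

lemma Kb: "z \<in> space (M \<Otimes>\<^sub>M M) \<Longrightarrow> \<bar>W (fst z) (snd z) - p\<bar> \<le> 1 + \<bar>p\<bar>"
  using Wb[of "fst z" "snd z"] by (auto simp: space_pair_measure)

lemma intg: "f \<in> borel_measurable (M \<Otimes>\<^sub>M M) \<Longrightarrow> (\<And>z. z \<in> space (M \<Otimes>\<^sub>M M) \<Longrightarrow> \<bar>f z\<bar> \<le> B)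
   \<Longrightarrow> integrable (M \<Otimes>\<^sub>M M) (f :: _ \<Rightarrow> real)"
  by (rule PP.integrable_const_bound[where B=B]) (auto intro!: AE_I2)

lemma intgM: "f \<in> borel_measurable M \<Longrightarrow> (\<And>z. z \<in> space M \<Longrightarrow> \<bar>f z\<bar> \<le> B)
   \<Longrightarrow> integrable M (f :: _ \<Rightarrow> real)"
  by (rule integrable_const_bound[where B=B]) (auto intro!: AE_I2)

lemma bprod: "\<bar>a\<bar> \<le> A \<Longrightarrow> \<bar>b\<bar> \<le> B \<Longrightarrow> \<bar>(a::real) * b\<bar> \<le> A * B"
  by (simp add: abs_mult mult_mono')

lemma Wsec: "x \<in> space M \<Longrightarrow> integrable M (\<lambda>y. W x y)"
  by (rule intgM[where B=1]) (auto simp: Wb measurable_Pair2[OF Wm, simplified])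

lemma marg1:
  assumes hm[measurable]: "h \<in> borel_measurable M" and hb: "\<And>x. x \<in> space M \<Longrightarrow> \<bar>h x\<bar> \<le> B"
  shows "(\<integral>z. h (fst z) * (W (fst z) (snd z) - p) \<partial>(M \<Otimes>\<^sub>M M)) = 0"
proof -
  have int: "integrable (M \<Otimes>\<^sub>M M) (\<lambda>z. h (fst z) * (W (fst z) (snd z) - p))"
    by (rule intg[where B="B * (1 + \<bar>p\<bar>)"]) (auto intro!: bprod hb Kb simp: space_pair_measure)
  have "(\<integral>z. h (fst z) * (W (fst z) (snd z) - p) \<partial>(M \<Otimes>\<^sub>M M)) = (\<integral>x. (\<integral>y. h x * (W x y - p) \<partial>M) \<partial>M)"
    using PP.integral_fst'[OF int] by simp
  also have "\<dots> = 0"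
  proof (rule integral_eq_zero_AE)
    show "AE x in M. (\<integral>y. h x * (W x y - p) \<partial>M) = 0"
      using reg AE_space unfolding regular_graphon_def
    proof (eventually_elim)
      case (elim x)
      have "(\<integral>y. (W x y - p) \<partial>M) = (\<integral>y. W x y \<partial>M) - p"
        using Wsec[OF elim(2)] by (simp add: prob_space)
      then show ?case using elim(1) by simp
    qed
  qed
  finally show ?thesis .
qed

lemma marg2:
  assumes hm[measurable]: "h \<in> borel_measurable M" and hb: "\<And>x. x \<in> space M \<Longrightarrow> \<bar>h x\<bar> \<le> B"
  shows "(\<integral>z. (W (fst z) (snd z) - p) * h (snd z) \<partial>(M \<Otimes>\<^sub>M M)) = 0"
proof -
  have int0: "integrable (M \<Otimes>\<^sub>M M) (\<lambda>z. (W (fst z) (snd z) - p) * h (snd z))"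
    by (rule intg[where B="(1 + \<bar>p\<bar>) * B"]) (auto intro!: bprod hb Kb simp: space_pair_measure)
  have eq: "(\<lambda>(x, y). (W x y - p) * h y) = (\<lambda>z. (W (fst z) (snd z) - p) * h (snd z))"
    by (simp add: case_prod_beta')
  have int: "integrable (M \<Otimes>\<^sub>M M) (\<lambda>(x, y). (W x y - p) * h y)"
    unfolding eq by (rule int0)
  have "(\<integral>z. (W (fst z) (snd z) - p) * h (snd z) \<partial>(M \<Otimes>\<^sub>M M)) = (\<integral>y. (\<integral>x. (W x y - p) * h y \<partial>M) \<partial>M)"
    using PP.integral_snd[OF int] eq by simp
  also have "\<dots> = 0"
  proof (rule integral_eq_zero_AE)
    show "AE y in M. (\<integral>x. (W x y - p) * h y \<partial>M) = 0"
      using reg AE_space unfolding regular_graphon_def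
    proof (eventually_elim)
      case (elim y)
      have "(\<integral>x. W x y \<partial>M) = (\<integral>x. W y x \<partial>M)"
        by (rule Bochner_Integration.integral_cong[OF refl]) (use Wb elim(2) in auto)
      moreover have "integrable M (\<lambda>x. W x y)"
        by (rule Bochner_Integration.integrable_cong[THEN iffD1, OF refl _ Wsec[OF elim(2)]]) (use Wb elim(2) in auto)
      ultimately have "(\<integral>x. (W x y - p) \<partial>M) = 0"
        using elim(1) by (simp add: prob_space)
      then show ?case by simp
    qed
  qed
  finally show ?thesis .
qed

lemma intconst:
  assumes U: "U \<in> sets M"
  shows "(\<integral>z. indicator U (fst z) * indicator U (snd z) * t \<partial>(M \<Otimes>\<^sub>M M)) = t * (measure M U)\<^sup>2"
proof -
  have "(\<integral>z. indicator U (fst z) * indicator U (snd z) * t \<partial>(M \<Otimes>\<^sub>M M))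
      = (\<integral>z. indicator (U \<times> U) z * t \<partial>(M \<Otimes>\<^sub>M M))"
    by (simp add: indicator_times)
  also have "\<dots> = measure (M \<Otimes>\<^sub>M M) (U \<times> U) * t"
    using U by (simp add: space_pair_measure Times_Int_Times sets.Int_space_eq2)
  also have "measure (M \<Otimes>\<^sub>M M) (U \<times> U) = (measure M U)\<^sup>2"
    using U by (simp add: measure_def emeasure_pair_measure_Times enn2real_mult power2_eq_square)
  finally show ?thesis by simp
qed

lemma ldK:
  assumes U[measurable]: "U \<in> sets M"
  shows "(\<integral>z. indicator U (fst z) * indicator U (snd z) * (W (fst z) (snd z) - p) \<partial>(M \<Otimes>\<^sub>M M)) \<ge> 0"
proof -
  have i1: "integrable (M \<Otimes>\<^sub>M M) (\<lambda>z. indicator U (fst z) * indicator U (snd z) * W (fst z) (snd z))"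
  proof (rule intg[where B=1])
    fix z assume "z \<in> space (M \<Otimes>\<^sub>M M)"
    then have "0 \<le> W (fst z) (snd z) \<and> W (fst z) (snd z) \<le> 1" using Wb by (auto simp: space_pair_measure)
    then show "\<bar>indicator U (fst z) * indicator U (snd z) * W (fst z) (snd z)\<bar> \<le> 1"
      by (auto simp: indicator_def)
  qed simp
  have i2: "integrable (M \<Otimes>\<^sub>M M) (\<lambda>z. indicator U (fst z) * indicator U (snd z) * p)"
    by (rule intg[where B="\<bar>p\<bar>"]) (auto simp: indicator_def)
  have "(\<integral>z. indicator U (fst z) * indicator U (snd z) * (W (fst z) (snd z) - p) \<partial>(M \<Otimes>\<^sub>M M))
     = (\<integral>z. indicator U (fst z) * indicator U (snd z) * W (fst z) (snd z) \<partial>(M \<Otimes>\<^sub>M M))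
       - (\<integral>z. indicator U (fst z) * indicator U (snd z) * p \<partial>(M \<Otimes>\<^sub>M M))"
    using Bochner_Integration.integral_diff[OF i1 i2] by (simp add: algebra_simps)
  also have "(\<integral>z. indicator U (fst z) * indicator U (snd z) * p \<partial>(M \<Otimes>\<^sub>M M)) = p * (measure M U)\<^sup>2"
    by (rule intconst[OF U])
  also have "(\<integral>z. indicator U (fst z) * indicator U (snd z) * W (fst z) (snd z) \<partial>(M \<Otimes>\<^sub>M M))
      = (\<integral>z. indicator (U \<times> U) z * W (fst z) (snd z) \<partial>(M \<Otimes>\<^sub>M M))"
    by (simp add: indicator_times)
  finally show ?thesis using ld U unfolding locally_dense_def by simp
qed

lemma intgK:
  assumes [measurable]: "A \<in> sets M" "B \<in> sets M"
  shows "integrable (M \<Otimes>\<^sub>M M) (\<lambda>z. indicator A (fst z) * indicator B (snd z) * (W (fst z) (snd z) - p))"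
proof (rule intg[where B="1 + \<bar>p\<bar>"])
  fix z assume z: "z \<in> space (M \<Otimes>\<^sub>M M)"
  show "\<bar>indicator A (fst z) * indicator B (snd z) * (W (fst z) (snd z) - p)\<bar> \<le> 1 + \<bar>p\<bar>"
    using Kb[OF z] by (auto simp: indicator_def)
qed simp

lemma bil:
  assumes fin: "finite S" and As: "\<And>a. a \<in> S \<Longrightarrow> A a \<in> sets M"
  shows "(\<integral>z. (\<Sum>a\<in>S. u a * indicator (A a) (fst z)) * (W (fst z) (snd z) - p) * (\<Sum>b\<in>S. u b * indicator (A b) (snd z)) \<partial>(M \<Otimes>\<^sub>M M))
     = (\<Sum>a\<in>S. \<Sum>b\<in>S. u a * u b * (\<integral>z. indicator (A a) (fst z) * indicator (A b) (snd z) * (W (fst z) (snd z) - p) \<partial>(M \<Otimes>\<^sub>M M)))"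
proof -
  have eq: "(\<Sum>a\<in>S. u a * indicator (A a) (fst z)) * (W (fst z) (snd z) - p) * (\<Sum>b\<in>S. u b * indicator (A b) (snd z))
     = (\<Sum>a\<in>S. \<Sum>b\<in>S. u a * u b * (indicator (A a) (fst z) * indicator (A b) (snd z) * (W (fst z) (snd z) - p)))" for z
  proof -
    have gen: "(\<Sum>a\<in>S. X a) * Y * (\<Sum>b\<in>S. Z b) = (\<Sum>a\<in>S. \<Sum>b\<in>S. X a * Y * Z b)" for X Z :: "_ \<Rightarrow> real" and Y :: real
      by (simp add: sum_distrib_left sum_distrib_right) (rule sum.swap)
    show ?thesis unfolding gen by (intro sum.cong refl) (simp add: mult_ac)
  qed
  have ii: "a \<in> S \<Longrightarrow> b \<in> S \<Longrightarrow> integrable (M \<Otimes>\<^sub>M M) (\<lambda>z. u a * u b * (indicator (A a) (fst z) * indicator (A b) (snd z) * (W (fst z) (snd z) - p)))" for a b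
    using intgK[OF As As] by simp
  show ?thesis unfolding eq
    apply (subst Bochner_Integration.integral_sum)
     apply (rule Bochner_Integration.integrable_sum) apply (rule ii) apply assumption+
    apply (rule sum.cong[OF refl])
    apply (subst Bochner_Integration.integral_sum)
     apply (rule ii) apply assumption+
    apply simp
    done
qed

lemma discrete:
  fixes I :: "'i set" and R :: "'i \<Rightarrow> 'a set" and c :: "'i \<Rightarrow> real"
  assumes fin: "finite I" and Rs: "\<And>a. a \<in> I \<Longrightarrow> R a \<in> sets M" and dj: "disjoint_family_on R I"
    and cov: "(\<Union>a\<in>I. R a) = space M" and small: "\<And>a. a \<in> I \<Longrightarrow> measure M (R a) \<le> e"
    and c01: "\<And>a. a \<in> I \<Longrightarrow> 0 \<le> c a \<and> c a \<le> 1"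
    and hc: "\<And>a x. a \<in> I \<Longrightarrow> x \<in> R a \<Longrightarrow> h x = c a"
  shows "(\<integral>z. h (fst z) * (W (fst z) (snd z) - p) * h (snd z) \<partial>(M \<Otimes>\<^sub>M M)) \<ge> - ((1 + \<bar>p\<bar>) * e)"
proof -
  define Kab where "Kab a b = (\<integral>z. indicator (R a) (fst z) * indicator (R b) (snd z) * (W (fst z) (snd z) - p) \<partial>(M \<Otimes>\<^sub>M M))" for a b
  have hsum: "h x = (\<Sum>a\<in>I. c a * indicator (R a) x)" if x: "x \<in> space M" for x
  proof -
    obtain a0 where a0: "a0 \<in> I" "x \<in> R a0" using x cov by auto
    have "(\<Sum>a\<in>I. c a * indicator (R a) x) = c a0 * indicator (R a0) x + (\<Sum>a\<in>I - {a0}. c a * indicator (R a) x)"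
      using sum.remove[OF fin a0(1)] by simp
    also have "(\<Sum>a\<in>I - {a0}. c a * indicator (R a) x) = 0"
    proof (rule sum.neutral, intro ballI)
      fix a assume a: "a \<in> I - {a0}"
      then have "x \<notin> R a" using dj a0 unfolding disjoint_family_on_def by blast
      then show "c a * indicator (R a) x = 0" by simp
    qed
    finally show ?thesis using hc[OF a0] a0 by simp
  qed
  have Qeq: "(\<integral>z. h (fst z) * (W (fst z) (snd z) - p) * h (snd z) \<partial>(M \<Otimes>\<^sub>M M))
      = (\<Sum>a\<in>I. \<Sum>b\<in>I. c a * c b * Kab a b)"
  proof -
    have "(\<integral>z. h (fst z) * (W (fst z) (snd z) - p) * h (snd z) \<partial>(M \<Otimes>\<^sub>M M))
      = (\<integral>z. (\<Sum>a\<in>I. c a * indicator (R a) (fst z)) * (W (fst z) (snd z) - p) * (\<Sum>b\<in>I. c b * indicator (R b) (snd z)) \<partial>(M \<Otimes>\<^sub>M M))"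
      by (rule Bochner_Integration.integral_cong[OF refl]) (auto simp: space_pair_measure hsum)
    also have "\<dots> = (\<Sum>a\<in>I. \<Sum>b\<in>I. c a * c b * Kab a b)"
      unfolding Kab_def by (rule bil[OF fin Rs])
    finally show ?thesis .
  qed
  have setS: "(\<Sum>a\<in>S. \<Sum>b\<in>S. Kab a b) \<ge> 0" if S: "S \<subseteq> I" for S
  proof -
    have finS: "finite S" using S fin finite_subset by blast
    define U where "U = (\<Union>a\<in>S. R a)"
    have U: "U \<in> sets M" unfolding U_def using Rs S finS by auto
    have djS: "disjoint_family_on R S" using dj S disjoint_family_on_mono by blast
    have ind: "indicator U x = (\<Sum>a\<in>S. 1 * indicator (R a) x :: real)" for x :: 'a
      unfolding U_def by (simp add: indicator_UN_disjoint[OF finS djS])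
    have "0 \<le> (\<integral>z. indicator U (fst z) * indicator U (snd z) * (W (fst z) (snd z) - p) \<partial>(M \<Otimes>\<^sub>M M))"
      by (rule ldK[OF U])
    also have "\<dots> = (\<integral>z. (\<Sum>a\<in>S. 1 * indicator (R a) (fst z)) * (W (fst z) (snd z) - p) * (\<Sum>b\<in>S. 1 * indicator (R b) (snd z)) \<partial>(M \<Otimes>\<^sub>M M))"
      unfolding ind by (simp add: algebra_simps)
    also have "\<dots> = (\<Sum>a\<in>S. \<Sum>b\<in>S. 1 * 1 * Kab a b)"
      unfolding Kab_def by (rule bil[OF finS]) (use Rs S in auto)
    finally show ?thesis by simp
  qed
  have ma: "(\<Sum>a\<in>I. \<Sum>b\<in>I. (if a = b then c a else c a * c b) * Kab a b) \<ge> 0"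
    by (rule multiaffine_nonneg[OF fin setS c01])
  have split: "(\<Sum>a\<in>I. \<Sum>b\<in>I. (if a = b then c a else c a * c b) * Kab a b)
     = (\<Sum>a\<in>I. \<Sum>b\<in>I. c a * c b * Kab a b) + (\<Sum>a\<in>I. (c a - c a * c a) * Kab a a)"
  proof -
    have "(\<Sum>a\<in>I. \<Sum>b\<in>I. (if a = b then c a else c a * c b) * Kab a b)
       = (\<Sum>a\<in>I. \<Sum>b\<in>I. c a * c b * Kab a b + (if a = b then (c a - c a * c a) * Kab a a else 0))"
      by (intro sum.cong refl) (auto simp: algebra_simps)
    also have "\<dots> = (\<Sum>a\<in>I. (\<Sum>b\<in>I. c a * c b * Kab a b) + (c a - c a * c a) * Kab a a)"
      by (intro sum.cong refl) (simp add: sum.distrib fin)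
    finally show ?thesis by (simp add: sum.distrib)
  qed
  have diag: "(c a - c a * c a) * Kab a a \<le> (1 + \<bar>p\<bar>) * e * measure M (R a)" if a: "a \<in> I" for a
  proof -
    have k0: "Kab a a \<ge> 0" unfolding Kab_def by (rule ldK[OF Rs[OF a]])
    have "Kab a a \<le> (\<integral>z. indicator (R a) (fst z) * indicator (R a) (snd z) * (1 + \<bar>p\<bar>) \<partial>(M \<Otimes>\<^sub>M M))"
      unfolding Kab_def
    proof (rule Bochner_Integration.integral_mono)
      show "integrable (M \<Otimes>\<^sub>M M) (\<lambda>z. indicator (R a) (fst z) * indicator (R a) (snd z) * (W (fst z) (snd z) - p))"
        by (rule intgK[OF Rs[OF a] Rs[OF a]])
      show "integrable (M \<Otimes>\<^sub>M M) (\<lambda>z. indicator (R a) (fst z) * indicator (R a) (snd z) * (1 + \<bar>p\<bar>))"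
        by (rule intg[where B="1 + \<bar>p\<bar>"]) (use Rs[OF a] in \<open>auto simp: indicator_def\<close>)
      fix z assume z: "z \<in> space (M \<Otimes>\<^sub>M M)"
      show "indicator (R a) (fst z) * indicator (R a) (snd z) * (W (fst z) (snd z) - p) \<le> indicator (R a) (fst z) * indicator (R a) (snd z) * (1 + \<bar>p\<bar>)"
        using Kb[OF z] by (auto simp: indicator_def)
    qed
    also have "\<dots> = (1 + \<bar>p\<bar>) * (measure M (R a))\<^sup>2" by (rule intconst[OF Rs[OF a]])
    also have "\<dots> \<le> (1 + \<bar>p\<bar>) * (e * measure M (R a))"
      using small[OF a] measure_nonneg[of M "R a"] by (intro mult_left_mono) (auto simp: power2_eq_square mult_right_mono)
    finally have kb: "Kab a a \<le> (1 + \<bar>p\<bar>) * e * measure M (R a)" by simp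
    have "0 \<le> c a - c a * c a" "c a - c a * c a \<le> 1" using c01[OF a] by (auto simp: algebra_simps intro: mult_left_le_one_le order_trans[OF _ add_increasing2[of "c a * c a" 1 1]])
    then have "(c a - c a * c a) * Kab a a \<le> 1 * Kab a a" using k0 by (intro mult_right_mono) auto
    then show ?thesis using kb by simp
  qed
  have "(\<Sum>a\<in>I. (c a - c a * c a) * Kab a a) \<le> (\<Sum>a\<in>I. (1 + \<bar>p\<bar>) * e * measure M (R a))"
    by (rule sum_mono) (rule diag)
  also have "\<dots> = (1 + \<bar>p\<bar>) * e * measure M (\<Union>a\<in>I. R a)"
  proof -
    have "R ` I \<subseteq> sets M" using Rs by auto
    from finite_measure_finite_Union[OF fin this dj] show ?thesis by (simp add: sum_distrib_left)
  qed
  also have "\<dots> = (1 + \<bar>p\<bar>) * e" using cov prob_space by simp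
  finally show ?thesis using Qeq split ma by linarith
qed

lemma approx_arith:
  fixes a b a' b' k d C :: real
  assumes "\<bar>b\<bar> \<le> 1" "\<bar>a'\<bar> \<le> 1" "\<bar>a - a'\<bar> \<le> d" "\<bar>b - b'\<bar> \<le> d" "\<bar>k\<bar> \<le> C"
  shows "a * k * b - a' * k * b' \<ge> - (2 * d * C)"
proof -
  have e: "a * k * b - a' * k * b' = k * ((a - a') * b + a' * (b - b'))" by (simp add: algebra_simps)
  have "\<bar>(a - a') * b\<bar> \<le> d * 1" by (rule bprod) (use assms in auto)
  moreover have "\<bar>a' * (b - b')\<bar> \<le> 1 * d" by (rule bprod) (use assms in auto)
  ultimately have "\<bar>(a - a') * b + a' * (b - b')\<bar> \<le> 2 * d" by linarith
  then have "\<bar>k * ((a - a') * b + a' * (b - b'))\<bar> \<le> C * (2 * d)" by (rule bprod[OF assms(5)])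
  then show ?thesis unfolding e by (simp add: abs_le_iff algebra_simps)
qed

lemma unit_case:
  assumes part: "\<And>e. e > 0 \<Longrightarrow> \<exists>(N::nat) P. (\<forall>j<N. P j \<in> sets M \<and> measure M (P j) \<le> e) \<and> disjoint_family_on P {..<N}
              \<and> (\<Union>j<N. P j) = space M"
    and gm[measurable]: "g \<in> borel_measurable M" and g01: "\<And>x. x \<in> space M \<Longrightarrow> 0 \<le> g x \<and> g x \<le> 1"
  shows "(\<integral>z. g (fst z) * (W (fst z) (snd z) - p) * g (snd z) \<partial>(M \<Otimes>\<^sub>M M)) \<ge> 0"
proof -
  let ?C = "1 + \<bar>p\<bar>"
  let ?Q = "\<lambda>h. (\<integral>z. h (fst z) * (W (fst z) (snd z) - p) * h (snd z) \<partial>(M \<Otimes>\<^sub>M M))"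
  have bound: "?Q g \<ge> - (3 * ?C * e)" if e: "e > 0" for e
  proof -
    obtain n :: nat where n: "1 / e < real n" using reals_Archimedean2 by blast
    have npos: "real n > 0" using n e by (smt (verit) divide_pos_pos)
    have ne: "1 / real n \<le> e" using n e npos by (simp add: field_simps)
    obtain N :: nat and P where P1: "\<forall>j<N. P j \<in> sets M \<and> measure M (P j) \<le> e"
      and P2: "disjoint_family_on P {..<N}" and P3: "(\<Union>j<N. P j) = space M"
      using part[OF e] by blast
    define fl where "fl x = \<lfloor>real n * g x\<rfloor>" for x
    have flm[measurable]: "fl \<in> measurable M (count_space UNIV)" unfolding fl_def by measurable
    have flb: "x \<in> space M \<Longrightarrow> 0 \<le> fl x \<and> fl x \<le> int n" for x
      using g01[of x] npos unfolding fl_def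
      by (auto intro!: floor_le_iff[THEN iffD2] mult_nonneg_nonneg) (smt (verit) mult_left_le of_nat_0_le_iff)
    define I where "I = {..n} \<times> {..<N}"
    define R where "R (a :: nat \<times> nat) = {x \<in> space M. fl x = int (fst a)} \<inter> P (snd a)" for a
    define c where "c a = real (fst a) / real n" for a :: "nat \<times> nat"
    define h where "h x = real_of_int (fl x) / real n" for x
    have Rs: "a \<in> I \<Longrightarrow> R a \<in> sets M" for a
    proof -
      assume a: "a \<in> I"
      have "{x \<in> space M. fl x = int (fst a)} \<in> sets M" by measurable
      then show ?thesis using P1 a unfolding R_def I_def by auto
    qed
    have "?Q h \<ge> - (?C * e)"
    proof (rule discrete[of I R e c h])
      show "finite I" unfolding I_def by simp
      show "\<And>a. a \<in> I \<Longrightarrow> R a \<in> sets M" by (rule Rs)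
      show "disjoint_family_on R I"
        unfolding disjoint_family_on_def
      proof (intro ballI impI)
        fix a b assume ab: "a \<in> I" "b \<in> I" "a \<noteq> b"
        show "R a \<inter> R b = {}"
        proof (cases "snd a = snd b")
          case True
          then have "fst a \<noteq> fst b" using ab by (simp add: prod_eq_iff)
          then show ?thesis unfolding R_def by auto
        next
          case False
          have "snd a \<in> {..<N}" "snd b \<in> {..<N}" using ab unfolding I_def by auto
          then have "P (snd a) \<inter> P (snd b) = {}" using P2 False unfolding disjoint_family_on_def by blast
          then show ?thesis unfolding R_def by auto
        qed
      qed
      show "(\<Union>a\<in>I. R a) = space M"
      proof
        show "(\<Union>a\<in>I. R a) \<subseteq> space M" unfolding R_def by auto
        show "space M \<subseteq> (\<Union>a\<in>I. R a)"
        proof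
          fix x assume x: "x \<in> space M"
          then obtain j where j: "j < N" "x \<in> P j" using P3 by auto
          have "(nat (fl x), j) \<in> I" using flb[OF x] j unfolding I_def by auto
          moreover have "x \<in> R (nat (fl x), j)" using flb[OF x] j x unfolding R_def by auto
          ultimately show "x \<in> (\<Union>a\<in>I. R a)" by blast
        qed
      qed
      show "measure M (R a) \<le> e" if a: "a \<in> I" for a
      proof -
        have "measure M (R a) \<le> measure M (P (snd a))"
          by (rule finite_measure_mono) (use P1 a in \<open>auto simp: R_def I_def\<close>)
        then show ?thesis using P1 a unfolding I_def by force
      qed
      show "0 \<le> c a \<and> c a \<le> 1" if a: "a \<in> I" for a
        using a npos unfolding c_def I_def by (auto simp: field_simps)
      show "h x = c a" if "a \<in> I" "x \<in> R a" for a x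
        using that unfolding h_def c_def R_def by auto
    qed
    moreover have "?Q g - ?Q h \<ge> - (2 * (1 / real n) * ?C)"
    proof -
      have hm[measurable]: "h \<in> borel_measurable M" unfolding h_def fl_def by measurable
      have hb: "x \<in> space M \<Longrightarrow> \<bar>h x\<bar> \<le> 1 \<and> \<bar>g x - h x\<bar> \<le> 1 / real n" for x
      proof -
        assume x: "x \<in> space M"
        have "0 \<le> h x" "h x \<le> 1" using flb[OF x] npos unfolding h_def by (auto simp: field_simps)
        moreover have "0 \<le> g x - h x" "g x - h x \<le> 1 / real n"
        proof -
          have f1: "real_of_int (fl x) \<le> real n * g x" unfolding fl_def by (rule of_int_floor_le)
          have f2: "real n * g x < real_of_int (fl x) + 1" unfolding fl_def by (rule real_of_int_floor_add_one_gt)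
          have eq: "g x - h x = (real n * g x - real_of_int (fl x)) / real n"
            unfolding h_def using npos by (simp add: field_simps)
          show "0 \<le> g x - h x" unfolding eq using f1 npos by simp
          show "g x - h x \<le> 1 / real n" unfolding eq using f2 npos by (intro divide_right_mono) auto
        qed
        ultimately show ?thesis by auto
      qed
      have i1: "integrable (M \<Otimes>\<^sub>M M) (\<lambda>z. g (fst z) * (W (fst z) (snd z) - p) * g (snd z))"
      proof (rule intg[where B="1 * ?C * 1"])
        fix z assume z: "z \<in> space (M \<Otimes>\<^sub>M M)"
        then have zz: "fst z \<in> space M" "snd z \<in> space M" by (auto simp: space_pair_measure)
        show "\<bar>g (fst z) * (W (fst z) (snd z) - p) * g (snd z)\<bar> \<le> 1 * ?C * 1"
          by (intro bprod Kb[OF z]) (use g01[OF zz(1)] g01[OF zz(2)] in auto)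
      qed simp
      have i2: "integrable (M \<Otimes>\<^sub>M M) (\<lambda>z. h (fst z) * (W (fst z) (snd z) - p) * h (snd z))"
      proof (rule intg[where B="1 * ?C * 1"])
        fix z assume z: "z \<in> space (M \<Otimes>\<^sub>M M)"
        then have zz: "fst z \<in> space M" "snd z \<in> space M" by (auto simp: space_pair_measure)
        show "\<bar>h (fst z) * (W (fst z) (snd z) - p) * h (snd z)\<bar> \<le> 1 * ?C * 1"
          by (intro bprod Kb[OF z]) (use hb[OF zz(1)] hb[OF zz(2)] in auto)
      qed simp
      have "?Q g - ?Q h = (\<integral>z. g (fst z) * (W (fst z) (snd z) - p) * g (snd z) - h (fst z) * (W (fst z) (snd z) - p) * h (snd z) \<partial>(M \<Otimes>\<^sub>M M))"
        using Bochner_Integration.integral_diff[OF i1 i2] by simp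
      also have "\<dots> \<ge> (\<integral>z. - (2 * (1 / real n) * ?C) \<partial>(M \<Otimes>\<^sub>M M))"
      proof (rule Bochner_Integration.integral_mono)
        show "integrable (M \<Otimes>\<^sub>M M) (\<lambda>z. - (2 * (1 / real n) * ?C))" by simp
        show "integrable (M \<Otimes>\<^sub>M M) (\<lambda>z. g (fst z) * (W (fst z) (snd z) - p) * g (snd z) - h (fst z) * (W (fst z) (snd z) - p) * h (snd z))"
          using i1 i2 by simp
        fix z assume z: "z \<in> space (M \<Otimes>\<^sub>M M)"
        then have zz: "fst z \<in> space M" "snd z \<in> space M" by (auto simp: space_pair_measure)
        show "- (2 * (1 / real n) * ?C) \<le> g (fst z) * (W (fst z) (snd z) - p) * g (snd z) - h (fst z) * (W (fst z) (snd z) - p) * h (snd z)"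
          by (rule approx_arith) (use g01[OF zz(2)] hb[OF zz(1)] hb[OF zz(2)] Kb[OF z] in auto)
      qed
      also have "(\<integral>z. - (2 * (1 / real n) * ?C) \<partial>(M \<Otimes>\<^sub>M M)) = - (2 * (1 / real n) * ?C)"
        by (simp add: PP.prob_space)
      finally show ?thesis .
    qed
    moreover have "2 * (1 / real n) * ?C \<le> 2 * e * ?C"
      using ne by (intro mult_right_mono) auto
    moreover have "3 * ?C * e = ?C * e + 2 * e * ?C" by (simp add: algebra_simps)
    ultimately show ?thesis by linarith
  qed
  show ?thesis
  proof (rule ccontr)
    assume "\<not> ?Q g \<ge> 0"
    then have neg: "?Q g < 0" by simp
    define e where "e = - ?Q g / (6 * ?C)"
    have epos: "e > 0" unfolding e_def using neg by (intro divide_pos_pos) auto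
    have "3 * ?C * e = - ?Q g / 2" unfolding e_def by (simp add: field_simps)
    then show False using bound[OF epos] neg by linarith
  qed
qed

lemma general_case:
  assumes part: "\<And>e. e > 0 \<Longrightarrow> \<exists>(N::nat) P. (\<forall>j<N. P j \<in> sets M \<and> measure M (P j) \<le> e) \<and> disjoint_family_on P {..<N}
              \<and> (\<Union>j<N. P j) = space M"
    and fm[measurable]: "f \<in> borel_measurable M" and fb: "\<And>x. x \<in> space M \<Longrightarrow> \<bar>f x\<bar> \<le> B0"
  shows "(\<integral>z. f (fst z) * (W (fst z) (snd z) - p) * f (snd z) \<partial>(M \<Otimes>\<^sub>M M)) \<ge> 0"
proof -
  define B where "B = \<bar>B0\<bar> + 1"
  have Bpos: "B > 0" unfolding B_def by simp
  have fB: "x \<in> space M \<Longrightarrow> \<bar>f x\<bar> \<le> B" for x using fb[of x] unfolding B_def by simp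
  define g where "g x = (f x + B) / (2 * B)" for x
  have gm[measurable]: "g \<in> borel_measurable M" unfolding g_def by measurable
  have g01: "x \<in> space M \<Longrightarrow> 0 \<le> g x \<and> g x \<le> 1" for x
    using fB[of x] Bpos unfolding g_def by (auto simp: field_simps abs_le_iff)
  have gb: "x \<in> space M \<Longrightarrow> \<bar>g x\<bar> \<le> 1" for x using g01[of x] by auto
  have Qg: "(\<integral>z. g (fst z) * (W (fst z) (snd z) - p) * g (snd z) \<partial>(M \<Otimes>\<^sub>M M)) \<ge> 0"
    by (rule unit_case[OF part gm g01]) auto
  have fg: "f x = 2 * B * g x - B" for x unfolding g_def using Bpos by (simp add: field_simps)
  let ?K = "\<lambda>z. W (fst z) (snd z) - p"
  define T1 where "T1 z = g (fst z) * ?K z * g (snd z)" for z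
  define T2 where "T2 z = g (fst z) * ?K z" for z
  define T3 where "T3 z = ?K z * g (snd z)" for z
  have i1: "integrable (M \<Otimes>\<^sub>M M) T1"
  proof (rule intg[where B="1 * (1 + \<bar>p\<bar>) * 1"])
    fix z assume z: "z \<in> space (M \<Otimes>\<^sub>M M)"
    then have zz: "fst z \<in> space M" "snd z \<in> space M" by (auto simp: space_pair_measure)
    show "\<bar>T1 z\<bar> \<le> 1 * (1 + \<bar>p\<bar>) * 1" unfolding T1_def
      by (intro bprod Kb[OF z]) (use gb[OF zz(1)] gb[OF zz(2)] in auto)
  qed (unfold T1_def, measurable)
  have i2: "integrable (M \<Otimes>\<^sub>M M) T2"
  proof (rule intg[where B="1 * (1 + \<bar>p\<bar>)"])
    fix z assume z: "z \<in> space (M \<Otimes>\<^sub>M M)"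
    then have zz: "fst z \<in> space M" "snd z \<in> space M" by (auto simp: space_pair_measure)
    show "\<bar>T2 z\<bar> \<le> 1 * (1 + \<bar>p\<bar>)" unfolding T2_def
      by (intro bprod Kb[OF z]) (use gb[OF zz(1)] in auto)
  qed (unfold T2_def, measurable)
  have i3: "integrable (M \<Otimes>\<^sub>M M) T3"
  proof (rule intg[where B="(1 + \<bar>p\<bar>) * 1"])
    fix z assume z: "z \<in> space (M \<Otimes>\<^sub>M M)"
    then have zz: "fst z \<in> space M" "snd z \<in> space M" by (auto simp: space_pair_measure)
    show "\<bar>T3 z\<bar> \<le> (1 + \<bar>p\<bar>) * 1" unfolding T3_def
      by (intro bprod Kb[OF z]) (use gb[OF zz(2)] in auto)
  qed (unfold T3_def, measurable)
  have i4: "integrable (M \<Otimes>\<^sub>M M) ?K"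
    by (rule intg[where B="1 + \<bar>p\<bar>"]) (auto intro: Kb)
  have m2: "integral\<^sup>L (M \<Otimes>\<^sub>M M) T2 = 0" unfolding T2_def by (rule marg1[OF gm gb])
  have m3: "integral\<^sup>L (M \<Otimes>\<^sub>M M) T3 = 0" unfolding T3_def by (rule marg2[OF gm gb])
  have m4: "integral\<^sup>L (M \<Otimes>\<^sub>M M) ?K = 0"
    using marg1[of "\<lambda>_. 1" 1] by simp
  have "(\<integral>z. f (fst z) * ?K z * f (snd z) \<partial>(M \<Otimes>\<^sub>M M))
      = (\<integral>z. (4 * B\<^sup>2) * T1 z - (2 * B\<^sup>2) * T2 z - (2 * B\<^sup>2) * T3 z + B\<^sup>2 * ?K z \<partial>(M \<Otimes>\<^sub>M M))"
    by (rule Bochner_Integration.integral_cong[OF refl]) (simp add: fg T1_def T2_def T3_def power2_eq_square algebra_simps)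
  also have "\<dots> = (4 * B\<^sup>2) * integral\<^sup>L (M \<Otimes>\<^sub>M M) T1 - (2 * B\<^sup>2) * integral\<^sup>L (M \<Otimes>\<^sub>M M) T2
      - (2 * B\<^sup>2) * integral\<^sup>L (M \<Otimes>\<^sub>M M) T3 + B\<^sup>2 * integral\<^sup>L (M \<Otimes>\<^sub>M M) ?K"
    using i1 i2 i3 i4 by simp
  also have "\<dots> = (4 * B\<^sup>2) * integral\<^sup>L (M \<Otimes>\<^sub>M M) T1" using m2 m3 m4 by simp
  also have "\<dots> \<ge> 0" using Qg unfolding T1_def by simp
  finally show ?thesis .
qed

end

lemma small_partition:
  fixes M :: "'a::polish_space measure"
  assumes std: "standard_prob_space M" and atl: "atomless M" and e: "e > 0"
  shows "\<exists>(N::nat) P. (\<forall>j<N. P j \<in> sets M \<and> measure M (P j) \<le> e) \<and> disjoint_family_on P {..<N}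
              \<and> (\<Union>j<N. P j) = space M"
proof -
  interpret prob_space M using std by (simp add: standard_prob_space_def)
  have setsM: "sets M = sets borel" using std by (simp add: standard_prob_space_def)
  have sp: "space M = UNIV" using sets_eq_imp_space_eq[OF setsM] by simp
  have opn: "open C \<Longrightarrow> C \<in> sets M" for C using setsM by simp
  have single: "measure M {x} = 0" for x
  proof (rule ccontr)
    assume "measure M {x} \<noteq> 0"
    then have pos: "measure M {x} > 0" using measure_nonneg[of M "{x}"] by linarith
    have "{x} \<in> sets M" using setsM by simp
    then obtain B where "B \<in> sets M" "B \<subseteq> {x}" "0 < measure M B" "measure M B < measure M {x}"
      using atl pos unfolding atomless_def by blast
    then show False by (metis less_irrefl measure_empty subset_singletonD)
  qed
  obtain \<B> :: "'a set set" where Bc: "countable \<B>" and Bo: "\<And>C. C \<in> \<B> \<Longrightarrow> open C"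
    and Bb: "\<And>S. open S \<Longrightarrow> \<exists>U. U \<subseteq> \<B> \<and> S = \<Union>U"
    using univ_second_countable by blast
  have nbhd: "\<exists>C\<in>\<B>. x \<in> C \<and> measure M C \<le> e" for x
  proof -
    define A where "A n = ball x (1 / Suc n)" for n
    have dec: "decseq A" unfolding A_def decseq_def
      by (auto simp: frac_le subset_ball)
    have inter: "(\<Inter>n. A n) = {x}"
    proof (safe)
      fix y assume y: "y \<in> (\<Inter>n. A n)"
      show "y = x"
      proof (rule ccontr)
        assume "y \<noteq> x"
        then have "dist x y > 0" by simp
        then obtain n where "1 / Suc n < dist x y" using nat_approx_posE by blast
        with y show False by (auto simp: A_def) (meson less_asym)
      qed
    qed (auto simp: A_def)
    have "(\<lambda>n. measure M (A n)) \<longlonglongrightarrow> measure M (\<Inter>n. A n)"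
      by (rule finite_Lim_measure_decseq[OF _ dec]) (auto simp: A_def opn)
    then have "(\<lambda>n. measure M (A n)) \<longlonglongrightarrow> 0" using inter single by simp
    then have "\<forall>\<^sub>F n in sequentially. measure M (A n) < e" using e by (rule order_tendstoD)
    then obtain n where n: "measure M (A n) < e" by (meson eventually_sequentially order.refl)
    obtain U where U: "U \<subseteq> \<B>" "A n = \<Union>U" using Bb[of "A n"] by (auto simp: A_def)
    have "x \<in> A n" by (simp add: A_def)
    then obtain C where C: "C \<in> U" "x \<in> C" using U by auto
    have "measure M C \<le> measure M (A n)"
    proof (rule finite_measure_mono)
      show "C \<subseteq> A n" using C U by auto
      show "A n \<in> sets M" unfolding A_def by (rule opn) simp
    qed
    then show ?thesis using C U n by auto
  qed
  define B' where "B' = {C\<in>\<B>. measure M C \<le> e}"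
  have B'c: "countable B'" using Bc unfolding B'_def by simp
  have B'ne: "B' \<noteq> {}" using nbhd[of undefined] unfolding B'_def by auto
  define A where "A = from_nat_into B'"
  have rA: "range A = B'" unfolding A_def using B'c B'ne by simp
  have Aset: "A j \<in> sets M" for j using rA Bo opn unfolding B'_def by blast
  have Ame: "measure M (A j) \<le> e" for j using rA unfolding B'_def by blast
  have UA: "(\<Union>j. A j) = UNIV"
  proof -
    have "x \<in> (\<Union>j. A j)" for x using nbhd[of x] rA unfolding B'_def by auto
    then show ?thesis by auto
  qed
  define UA where "UA N = (\<Union>j\<in>{..<N}. A j)" for N
  have inc: "incseq UA" unfolding UA_def incseq_def by (auto 4 3)
  have UAU: "(\<Union>N. UA N) = UNIV" using UA unfolding UA_def by auto
  have UAset: "UA N \<in> sets M" for N unfolding UA_def using Aset by auto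
  have "(\<lambda>N. measure M (UA N)) \<longlonglongrightarrow> measure M (\<Union>N. UA N)"
    by (rule finite_Lim_measure_incseq) (use UAset inc in auto)
  then have "(\<lambda>N. measure M (UA N)) \<longlonglongrightarrow> 1" using UAU prob_space sp by simp
  then have "\<forall>\<^sub>F N in sequentially. 1 - e < measure M (UA N)" using e by (intro order_tendstoD) auto
  then obtain N where N: "1 - e < measure M (UA N)" by (meson eventually_sequentially order.refl)
  define P where "P j = (if j < N then disjointed A j else UNIV - UA N)" for j
  have dsub: "disjointed A j \<subseteq> A j" for j by (rule disjointed_subset)
  have dset: "disjointed A j \<in> sets M" for j
    using sets.range_disjointed_sets[of A M] Aset by auto
  have Tme: "measure M (UNIV - UA N) \<le> e"
    using prob_compl[OF UAset[of N]] N sp by simp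
  have P1: "\<forall>j<Suc N. P j \<in> sets M \<and> measure M (P j) \<le> e"
  proof (intro allI impI conjI)
    fix j assume "j < Suc N"
    show "P j \<in> sets M" unfolding P_def using dset sets.compl_sets[OF UAset[of N]] sp by auto
    show "measure M (P j) \<le> e"
    proof (cases "j < N")
      case True
      have "measure M (disjointed A j) \<le> measure M (A j)"
        by (rule finite_measure_mono[OF dsub Aset])
      then show ?thesis using True Ame[of j] by (simp add: P_def)
    qed (use Tme P_def in simp)
  qed
  have P2: "disjoint_family_on P {..<Suc N}"
    unfolding disjoint_family_on_def
  proof (intro ballI impI)
    fix i j assume ij: "i \<in> {..<Suc N}" "j \<in> {..<Suc N}" "i \<noteq> j"
    show "P i \<inter> P j = {}"
    proof (cases "i < N \<and> j < N")
      case True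
      then show ?thesis using disjoint_family_disjointed[of A] ij unfolding P_def disjoint_family_on_def by auto
    next
      case False
      have "disjointed A k \<subseteq> UA N" if "k < N" for k using dsub[of k] that unfolding UA_def by auto
      then have sub: "k < N \<Longrightarrow> x \<in> disjointed A k \<Longrightarrow> x \<in> UA N" for k x by blast
      have "(i = N \<and> j < N) \<or> (j = N \<and> i < N)" using False ij by auto
      then show ?thesis
      proof
        assume h: "i = N \<and> j < N"
        then show ?thesis unfolding P_def using sub[of j] by auto
      next
        assume h: "j = N \<and> i < N"
        then show ?thesis unfolding P_def using sub[of i] by auto
      qed
    qed
  qed
  have P3: "(\<Union>j<Suc N. P j) = space M"
  proof -
    have "(\<Union>j<N. disjointed A j) = UA N" unfolding UA_def
      using finite_UN_disjointed_eq[of A N] by (simp add: atLeast0LessThan)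
    moreover have "(\<Union>j<Suc N. P j) = (\<Union>j<N. disjointed A j) \<union> (UNIV - UA N)"
      unfolding P_def lessThan_Suc by auto
    ultimately show ?thesis using sp by auto
  qed
  show ?thesis apply (rule exI[where x="Suc N"]) apply (rule exI[where x=P]) using P1 P2 P3 by simp
qed

theorem corollary2p15:
  fixes M :: "'a::polish_space measure" and W :: "'a \<Rightarrow> 'a \<Rightarrow> real" and p :: real
  assumes "standard_prob_space M" and "atomless M"
    and "graphon M W" and "locally_dense M p W" and "regular_graphon M p W"
  shows "psd_kernel M (\<lambda>x y. W x y - p)"
proof -
  have pM: "prob_space M" using assms(1) by (simp add: standard_prob_space_def)
  interpret G: gsetup M W p
    by (intro gsetup.intro gsetup_axioms.intro pM assms(3-5))
  have part: "\<And>e. e > 0 \<Longrightarrow> \<exists>(N::nat) P. (\<forall>j<N. P j \<in> sets M \<and> measure M (P j) \<le> e) \<and> disjoint_family_on P {..<N}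
              \<and> (\<Union>j<N. P j) = space M"
    by (rule small_partition[OF assms(1,2)])
  have k1: "(\<lambda>z. W (fst z) (snd z) - p) \<in> borel_measurable (M \<Otimes>\<^sub>M M)" by measurable
  have k2: "\<exists>B. \<forall>x\<in>space M. \<forall>y\<in>space M. \<bar>W x y - p\<bar> \<le> B"
    using G.Kb by (intro exI[of _ "1 + \<bar>p\<bar>"]) (auto simp: space_pair_measure)
  have k3: "\<forall>x\<in>space M. \<forall>y\<in>space M. W x y - p = W y x - p" using G.Wb by auto
  have k4: "\<forall>f :: 'a \<Rightarrow> real \<in> borel_measurable M. (\<exists>B. \<forall>x\<in>space M. \<bar>f x\<bar> \<le> B) \<longrightarrow>
        (\<integral>z. f (fst z) * (W (fst z) (snd z) - p) * f (snd z) \<partial>(M \<Otimes>\<^sub>M M)) \<ge> 0"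
  proof (intro ballI impI)
    fix f :: "'a \<Rightarrow> real" assume fm: "f \<in> borel_measurable M" and "\<exists>B. \<forall>x\<in>space M. \<bar>f x\<bar> \<le> B"
    then obtain B where "\<forall>x\<in>space M. \<bar>f x\<bar> \<le> B" by blast
    then show "(\<integral>z. f (fst z) * (W (fst z) (snd z) - p) * f (snd z) \<partial>(M \<Otimes>\<^sub>M M)) \<ge> 0"
      using G.general_case[OF part fm] by blast
  qed
  show ?thesis unfolding psd_kernel_def kernel_def using k1 k2 k3 k4 by simp
qed

end
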